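(* Let $n>2k\ge2$ be integers and let $J(n,k)$ be the Johnson graph with vertex set $V$ the $k$-subsets of $[n]$, two vertices adjacent iff their intersection has size $k-1$; let $A$ be its adjacency matrix, with distinct eigenvalues $\phi_0>\dots>\phi_k$ and corresponding orthogonal eigenprojections $P_0,\dots,P_k$. Let $w_1\neq w_2$ be two vertices, $\gamma>0$, and $H=-\gamma A-|w_1\rangle\langle w_1|-|w_2\rangle\langle w_2|$ on $\mathcal{H}=\mathbb{C}^V$. Let $\mathcal{H}_{\mathrm{inv}}$ be the subspace of vectors $f\in\mathcal{H}$ such that $f(v)=f(v')$ whenever $|v\cap w_1\cap w_2|=|v'\cap w_1\cap w_2|$ and the multisets $\{|v\cap w_1|,|v\cap w_2|\}$ and $\{|v'\cap w_1|,|v'\cap w_2|\}$ coincide. Let $\lambda$ be an eigenvalue of $H$ having an eigenvector in $\mathcal{H}_{\mathrm{inv}}$, and suppose $\lambda\notin\sigma(-\gamma A)$. Define $$m_i=1+\sum_{\ell=0}^k\frac{\|P_\ell|w_i\rangle\|^2}{\lambda+\gamma\phi_\ell}\ (i=1,2),\qquad m_3=\sum_{\ell=0}^k\frac{\langle w_1|P_\ell|w_2\rangle}{\lambda+\gamma\phi_\ell}.$$ Then $m_1+m_3=m_2+m_3=0$.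
   Context: $\{|v\rangle : v\in V\}$ is the computational basis; $\sigma(U)$ denotes the spectrum of $U$. *)

theory Defs
  imports "HOL-Analysis.Analysis" "HOL-Library.Multiset"
begin

definition johnson_vertices :: "nat \<Rightarrow> nat \<Rightarrow> nat set set" where
  "johnson_vertices n k = {S. S \<subseteq> {1..n} \<and> card S = k}"

definition johnson_adj :: "nat \<Rightarrow> nat set \<Rightarrow> nat set \<Rightarrow> bool" where
  "johnson_adj k u v \<longleftrightarrow> card (u \<inter> v) = k - 1"

text \<open>The Hilbert space C^V, represented as complex functions vanishing outside V.\<close>
definition vecs :: "'v set \<Rightarrow> ('v \<Rightarrow> complex) set" where
  "vecs V = {f. \<forall>v. v \<notin> V \<longrightarrow> f v = 0}"

definition cinner :: "'v set \<Rightarrow> ('v \<Rightarrow> complex) \<Rightarrow> ('v \<Rightarrow> complex) \<Rightarrow> complex" where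
  "cinner V f g = (\<Sum>v\<in>V. cnj (f v) * g v)"

definition ket :: "'v \<Rightarrow> 'v \<Rightarrow> complex" where
  "ket w = (\<lambda>v. if v = w then 1 else 0)"

definition johnson_A :: "nat \<Rightarrow> nat \<Rightarrow> (nat set \<Rightarrow> complex) \<Rightarrow> nat set \<Rightarrow> complex" where
  "johnson_A n k f = (\<lambda>u. if u \<in> johnson_vertices n k
      then (\<Sum>v\<in>johnson_vertices n k. (if johnson_adj k u v then 1 else 0) * f v) else 0)"

definition eigenvalues :: "'v set \<Rightarrow> (('v \<Rightarrow> complex) \<Rightarrow> ('v \<Rightarrow> complex)) \<Rightarrow> complex set" where
  "eigenvalues V T = {\<mu>. \<exists>f\<in>vecs V. f \<noteq> (\<lambda>_. 0) \<and> T f = (\<lambda>v. \<mu> * f v)}"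

definition eigenspace :: "'v set \<Rightarrow> (('v \<Rightarrow> complex) \<Rightarrow> ('v \<Rightarrow> complex)) \<Rightarrow> complex \<Rightarrow> ('v \<Rightarrow> complex) set" where
  "eigenspace V T \<mu> = {f\<in>vecs V. T f = (\<lambda>v. \<mu> * f v)}"

definition orth_proj :: "'v set \<Rightarrow> ('v \<Rightarrow> complex) set \<Rightarrow> ('v \<Rightarrow> complex) \<Rightarrow> ('v \<Rightarrow> complex)" where
  "orth_proj V W x = (THE y. y \<in> W \<and> (\<forall>z\<in>W. cinner V z (\<lambda>v. x v - y v) = 0))"

definition eigenproj :: "'v set \<Rightarrow> (('v \<Rightarrow> complex) \<Rightarrow> ('v \<Rightarrow> complex)) \<Rightarrow> complex \<Rightarrow> ('v \<Rightarrow> complex) \<Rightarrow> ('v \<Rightarrow> complex)" where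
  "eigenproj V T \<phi> = orth_proj V (eigenspace V T \<phi>)"

definition hamiltonian :: "nat \<Rightarrow> nat \<Rightarrow> real \<Rightarrow> nat set \<Rightarrow> nat set
    \<Rightarrow> (nat set \<Rightarrow> complex) \<Rightarrow> nat set \<Rightarrow> complex" where
  "hamiltonian n k \<gamma> w1 w2 f = (\<lambda>u. - (complex_of_real \<gamma>) * johnson_A n k f u
      - f w1 * ket w1 u - f w2 * ket w2 u)"

definition H_inv :: "nat \<Rightarrow> nat \<Rightarrow> nat set \<Rightarrow> nat set \<Rightarrow> (nat set \<Rightarrow> complex) set" where
  "H_inv n k w1 w2 = {f\<in>vecs (johnson_vertices n k).
     \<forall>v\<in>johnson_vertices n k. \<forall>v'\<in>johnson_vertices n k.
       card (v \<inter> w1 \<inter> w2) = card (v' \<inter> w1 \<inter> w2) \<and>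
       {# card (v \<inter> w1), card (v \<inter> w2) #} = {# card (v' \<inter> w1), card (v' \<inter> w2) #}
       \<longrightarrow> f v = f v'}"

end

theory Submission
  imports Defs
begin


definition matop :: "'v set \<Rightarrow> ('v \<Rightarrow> 'v \<Rightarrow> complex) \<Rightarrow> ('v \<Rightarrow> complex) \<Rightarrow> 'v \<Rightarrow> complex" where
  "matop V M f = (\<lambda>u. if u \<in> V then (\<Sum>v\<in>V. M u v * f v) else 0)"

lemma cinner_add_right: "cinner V f (\<lambda>v. g v + h v) = cinner V f g + cinner V f h"
  by (simp add: cinner_def distrib_left sum.distrib)
lemma cinner_diff_right: "cinner V f (\<lambda>v. g v - h v) = cinner V f g - cinner V f h"
  by (simp add: cinner_def right_diff_distrib sum_subtractf)
lemma cinner_scale_right: "cinner V f (\<lambda>v. c * g v) = c * cinner V f g"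
  by (simp add: cinner_def sum_distrib_left mult.left_commute)
lemma cinner_scale_left: "cinner V (\<lambda>v. c * f v) g = cnj c * cinner V f g"
  by (simp add: cinner_def sum_distrib_left mult.assoc)
lemma cinner_sum_right: "cinner V f (\<lambda>v. \<Sum>i\<in>I. g i v) = (\<Sum>i\<in>I. cinner V f (g i))"
  by (simp add: cinner_def sum_distrib_left sum.swap[of _ I])
lemma cinner_commute: "cinner V g f = cnj (cinner V f g)"
  by (simp add: cinner_def mult.commute)
lemma cinner_ket_left: "finite V \<Longrightarrow> w \<in> V \<Longrightarrow> cinner V (ket w) g = g w"
proof -
  assume "finite V" "w \<in> V"
  have "cinner V (ket w) g = (\<Sum>v\<in>V. if v = w then g v else 0)"
    unfolding cinner_def by (rule sum.cong) (auto simp: ket_def)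
  then show ?thesis using \<open>finite V\<close> \<open>w \<in> V\<close> by simp
qed
lemma cinner_ket_right: "finite V \<Longrightarrow> w \<in> V \<Longrightarrow> cinner V g (ket w) = cnj (g w)"
  by (metis cinner_commute cinner_ket_left)
lemma cinner_self: "cinner V f f = complex_of_real (\<Sum>v\<in>V. (cmod (f v))\<^sup>2)"
  unfolding cinner_def of_real_sum by (intro sum.cong refl) (use complex_norm_square in simp)
lemma cinner_self_zero:
  assumes "finite V" "f \<in> vecs V" "cinner V f f = 0" shows "f = (\<lambda>_. 0)"
proof
  fix v
  have "(\<Sum>v\<in>V. (cmod (f v))\<^sup>2) = 0" using assms(3) unfolding cinner_self of_real_eq_0_iff .
  then have "\<forall>v\<in>V. (cmod (f v))\<^sup>2 = 0" using assms(1) by (subst (asm) sum_nonneg_eq_0_iff) auto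
  then show "f v = 0" using assms(2) by (cases "v \<in> V") (auto simp: vecs_def)
qed

lemma matop_selfadj:
  assumes "\<And>u v. M u v = cnj (M v u)"
  shows "cinner V f (matop V M g) = cinner V (matop V M f) g"
proof -
  have "cinner V f (matop V M g) = (\<Sum>u\<in>V. \<Sum>v\<in>V. cnj (f u) * M u v * g v)"
    by (simp add: cinner_def matop_def sum_distrib_left mult.assoc)
  also have "\<dots> = (\<Sum>v\<in>V. \<Sum>u\<in>V. cnj (f u) * M u v * g v)" by (rule sum.swap)
  also have "\<dots> = (\<Sum>v\<in>V. \<Sum>u\<in>V. cnj (M v u * f u) * g v)"
    by (intro sum.cong refl) (subst assms, simp)
  also have "\<dots> = cinner V (matop V M f) g"
    unfolding cinner_def matop_def by (simp add: sum_distrib_right)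
  finally show ?thesis .
qed



lemma cinner_sum_left: "cinner V (\<lambda>v. \<Sum>i\<in>I. c i * g i v) f = (\<Sum>i\<in>I. cnj (c i) * cinner V (g i) f)"
  by (simp add: cinner_def sum_distrib_left sum_distrib_right sum.swap[of _ I] mult.assoc)
lemma cinner_diff_left: "cinner V (\<lambda>v. g v - h v) f = cinner V g f - cinner V h f"
  by (simp add: cinner_def left_diff_distrib sum_subtractf)
lemma cinner_expand:
  "cinner V (\<lambda>v. a v + complex_of_real t * b v) (\<lambda>v. c v + complex_of_real t * d v)
   = cinner V a c + complex_of_real t * cinner V a d + complex_of_real t * cinner V b c
     + complex_of_real (t\<^sup>2) * cinner V b d"
  by (simp add: cinner_def sum.distrib sum_distrib_left algebra_simps power2_eq_square)

lemma vecs_sum: "(\<And>i. i \<in> I \<Longrightarrow> g i \<in> vecs V) \<Longrightarrow> (\<lambda>v. \<Sum>i\<in>I. c i * g i v) \<in> vecs V"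
  by (auto simp: vecs_def)
lemma matop_vecs: "matop V M f \<in> vecs V"
  by (auto simp: vecs_def matop_def)
lemma matop_sum: "matop V M (\<lambda>v. \<Sum>i\<in>I. c i * g i v) = (\<lambda>u. \<Sum>i\<in>I. c i * matop V M (g i) u)"
  by (auto simp: matop_def sum_distrib_left sum.swap[of _ I] mult.left_commute)
lemma matop_lin: "matop V M (\<lambda>v. a * f v + b * g v) = (\<lambda>u. a * matop V M f u + b * matop V M g u)"
  by (auto simp: matop_def sum_distrib_left sum.distrib algebra_simps)
lemma matop_diff: "matop V M (\<lambda>v. f v - g v) = (\<lambda>u. matop V M f u - matop V M g u)"
  by (auto simp: matop_def sum_subtractf algebra_simps)

definition orthonormal :: "'v set \<Rightarrow> ('v \<Rightarrow> complex) set \<Rightarrow> bool" where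
  "orthonormal V B \<longleftrightarrow> B \<subseteq> vecs V \<and> (\<forall>b\<in>B. \<forall>b'\<in>B. cinner V b b' = (if b = b' then 1 else 0))"

lemma orthonormal_expand_inner:
  assumes "orthonormal V B" "finite B" "b' \<in> B"
  shows "cinner V b' (\<lambda>v. \<Sum>b\<in>B. c b * b v) = c b'"
proof -
  have "cinner V b' (\<lambda>v. \<Sum>b\<in>B. c b * b v) = (\<Sum>b\<in>B. c b * cinner V b' b)"
    by (simp add: cinner_sum_right cinner_scale_right)
  also have "\<dots> = (\<Sum>b\<in>B. if b = b' then c b else 0)"
    using assms by (intro sum.cong refl) (auto simp: orthonormal_def)
  also have "\<dots> = c b'" using assms by simp
  finally show ?thesis .
qed

lemma bessel:
  assumes "orthonormal V B" "finite B"
  shows "(\<Sum>b\<in>B. (cmod (cinner V b x))\<^sup>2) \<le> Re (cinner V x x)"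
proof -
  define s where "s = (\<lambda>v. \<Sum>b\<in>B. cinner V b x * b v)"
  define r where "r = (\<lambda>v. x v - s v)"
  have rb: "cinner V b r = 0" if "b \<in> B" for b
    unfolding r_def s_def cinner_diff_right using orthonormal_expand_inner[OF assms that] by simp
  have "cinner V r r = cinner V x r - (\<Sum>b\<in>B. cnj (cinner V b x) * cinner V b r)"
    using cinner_diff_left[of V x s r] cinner_sum_left[of V "\<lambda>b. cinner V b x" "\<lambda>b. b" B r]
    by (simp add: r_def[symmetric] s_def[symmetric])
  also have "\<dots> = cinner V x r" using rb by simp
  also have "\<dots> = cinner V x x - (\<Sum>b\<in>B. cinner V b x * cinner V x b)"
    unfolding r_def s_def cinner_diff_right cinner_sum_right cinner_scale_right ..
  also have "\<dots> = cinner V x x - complex_of_real (\<Sum>b\<in>B. (cmod (cinner V b x))\<^sup>2)"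
    unfolding of_real_sum
    by (intro arg_cong2[where f="(-)"] refl sum.cong) (simp_all add: cinner_commute[of V x], use complex_norm_square in simp)
  finally have "Re (cinner V r r) = Re (cinner V x x) - (\<Sum>b\<in>B. (cmod (cinner V b x))\<^sup>2)" by simp
  moreover have "Re (cinner V r r) \<ge> 0" by (simp add: cinner_self sum_nonneg)
  ultimately show ?thesis by linarith
qed

lemma orthonormal_card:
  assumes "orthonormal V B" "finite B" "finite V"
  shows "card B \<le> card V"
proof -
  have "(\<Sum>v\<in>V. \<Sum>b\<in>B. (cmod (cinner V b (ket v)))\<^sup>2) \<le> (\<Sum>v\<in>V. Re (cinner V (ket v) (ket v)))"
    by (intro sum_mono bessel assms)
  also have "\<dots> = (\<Sum>v\<in>V. 1)" using assms(3) by (intro sum.cong refl) (subst cinner_ket_left, auto simp: ket_def)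
  also have "\<dots> = card V" by simp
  finally have 1: "(\<Sum>v\<in>V. \<Sum>b\<in>B. (cmod (cinner V b (ket v)))\<^sup>2) \<le> card V" .
  have "(\<Sum>v\<in>V. \<Sum>b\<in>B. (cmod (cinner V b (ket v)))\<^sup>2) = (\<Sum>b\<in>B. \<Sum>v\<in>V. (cmod (b v))\<^sup>2)"
    using assms(3) by (subst sum.swap) (intro sum.cong refl, simp add: cinner_ket_right)
  also have "\<dots> = (\<Sum>b\<in>B. Re (cinner V b b))" by (simp add: cinner_self)
  also have "\<dots> = (\<Sum>b\<in>B. 1)" using assms(1) by (intro sum.cong refl) (auto simp: orthonormal_def)
  also have "\<dots> = card B" by simp
  finally show ?thesis using 1 by simp
qed

lemma orthonormal_subset: "orthonormal V B \<Longrightarrow> B' \<subseteq> B \<Longrightarrow> orthonormal V B'"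
  unfolding orthonormal_def by blast

lemma orthonormal_finite:
  assumes "orthonormal V B" "finite V"
  shows "finite B \<and> card B \<le> card V"
proof (cases "finite B")
  case True then show ?thesis using orthonormal_card assms by blast
next
  case False
  then obtain B' where "B' \<subseteq> B" "finite B'" "card B' = Suc (card V)"
    using infinite_arbitrarily_large by blast
  then show ?thesis using orthonormal_card[of V B'] orthonormal_subset[OF assms(1)] assms by force
qed



lemma matop_scale: "matop V M (\<lambda>v. c * f v) = (\<lambda>u. c * matop V M f u)"
  by (auto simp: matop_def sum_distrib_left algebra_simps)
lemma matop_add_scale: "matop V M (\<lambda>v. f v + c * g v) = (\<lambda>u. matop V M f u + c * matop V M g u)"
  by (auto simp: matop_def sum_distrib_left sum.distrib algebra_simps)
lemma cinner_zero_left: "cinner V (\<lambda>_. 0) g = 0"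
  by (simp add: cinner_def)

locale herm =
  fixes V :: "'v set" and M :: "'v \<Rightarrow> 'v \<Rightarrow> complex"
  assumes finV: "finite V" and hermM: "\<And>u v. M u v = cnj (M v u)"
begin

abbreviation "T \<equiv> matop V M"

lemma selfadj: "cinner V f (T g) = cinner V (T f) g"
  by (rule matop_selfadj[OF hermM])

lemma rq_real: "cnj (cinner V x (T x)) = cinner V x (T x)"
  by (metis cinner_commute selfadj)

definition eigset :: "('v \<Rightarrow> complex) set \<Rightarrow> bool" where
  "eigset B \<longleftrightarrow> orthonormal V B \<and> (\<forall>b\<in>B. T b = (\<lambda>v. cinner V b (T b) * b v))"

lemma rayleigh:
  assumes eB: "eigset B" and u: "u \<in> vecs V" "\<forall>b\<in>B. cinner V b u = 0" "u \<noteq> (\<lambda>_. 0)"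
  shows "\<exists>e\<in>vecs V. (\<forall>b\<in>B. cinner V b e = 0) \<and> cinner V e e = 1 \<and> T e = (\<lambda>v. cinner V e (T e) * e v)"
proof -
  define U where "U = {x\<in>vecs V. \<forall>b\<in>B. cinner V b x = 0}"
  have TU: "T x \<in> U" if x: "x \<in> U" for x
  proof -
    have "cinner V b (T x) = 0" if b: "b\<in>B" for b
    proof -
      have "cinner V b (T x) = cinner V (T b) x" by (rule selfadj)
      also have "\<dots> = cinner V (\<lambda>v. cinner V b (T b) * b v) x"
        using eB b unfolding eigset_def by metis
      also have "\<dots> = cnj (cinner V b (T b)) * cinner V b x" by (rule cinner_scale_left)
      also have "\<dots> = 0" using x b by (simp add: U_def)
      finally show ?thesis .
    qed
    then show ?thesis using matop_vecs by (simp add: U_def)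
  qed
  have U_add: "(\<lambda>v. x v + c * y v) \<in> U" if "x \<in> U" "y \<in> U" for x y c
    using that by (auto simp: U_def vecs_def cinner_add_right cinner_scale_right)
  have U_scale: "(\<lambda>v. c * x v) \<in> U" if "x \<in> U" for x c
    using that by (auto simp: U_def vecs_def cinner_scale_right)
  define S where "S = {x\<in>U. cinner V x x = 1}"
  define g where "g = (\<lambda>x. Re (cinner V x (T x)))"
  have coord: "\<And>A i. continuous_on A (\<lambda>x::'v\<Rightarrow>complex. x i)"
    by (rule continuous_on_subset[OF continuous_on_product_coordinates]) simp
  have g_eq: "g = (\<lambda>x. Re (\<Sum>v\<in>V. \<Sum>w\<in>V. cnj (x v) * (M v w * x w)))"
    by (auto simp: g_def cinner_def matop_def sum_distrib_left intro!: ext sum.cong)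
  have gcont: "continuous_on A g" for A
    unfolding g_eq by (intro continuous_intros coord)
  have Seq: "S = (\<Inter>v\<in>-V. {x. x v = 0}) \<inter> (\<Inter>b\<in>B. {x. cinner V b x = 0}) \<inter> {x. cinner V x x = 1}"
    by (auto simp: S_def U_def vecs_def)
  have "closed S" unfolding Seq cinner_def
    by (intro closed_Int closed_INT ballI closed_Collect_eq continuous_intros coord)
  define K where "K = (\<lambda>v. if v \<in> V then cball 0 1 else {0::complex})"
  have "compactin (product_topology (\<lambda>_. euclidean) UNIV) (PiE UNIV K)"
    by (subst compactin_PiE) (auto simp: K_def)
  then have cK: "compact (Pi UNIV K)" by (simp add: euclidean_product_topology PiE_UNIV_domain)
  have SK: "S \<subseteq> Pi UNIV K"
  proof
    fix x assume x: "x \<in> S"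
    have "cinner V x x = 1" using x by (simp add: S_def)
    then have "complex_of_real (\<Sum>v\<in>V. (cmod (x v))\<^sup>2) = 1" by (simp only: cinner_self)
    then have s1: "(\<Sum>v\<in>V. (cmod (x v))\<^sup>2) = 1" using of_real_eq_1_iff by blast
    show "x \<in> Pi UNIV K"
    proof (rule Pi_I)
      fix v
      show "x v \<in> K v"
      proof (cases "v \<in> V")
        case True
        have "(cmod (x v))\<^sup>2 \<le> 1" using s1 member_le_sum[of v V "\<lambda>v. (cmod (x v))\<^sup>2"] True finV by simp
        then have "cmod (x v) \<le> 1" by (simp add: power_le_one_iff)
        then show ?thesis using True by (simp add: K_def)
      next
        case False then show ?thesis using x by (simp add: K_def S_def U_def vecs_def)
      qed
    qed
  qed
  have cS: "compact S"
    using compact_Int_closed[OF cK \<open>closed S\<close>] SK by (simp add: Int_absorb1)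
  have norm: "(\<lambda>v. complex_of_real (1 / sqrt s) * x v) \<in> S \<and>
      g (\<lambda>v. complex_of_real (1 / sqrt s) * x v) = g x / s"
    if x: "x \<in> U" and s: "s = Re (cinner V x x)" "s > 0" for x s
  proof -
    let ?c = "complex_of_real (1 / sqrt s)"
    have cc: "cnj ?c * ?c = complex_of_real (1 / s)"
      using s by (simp flip: of_real_mult)
    have xx: "cinner V x x = complex_of_real s" using s by (simp add: cinner_self)
    have "cinner V (\<lambda>v. ?c * x v) (\<lambda>v. ?c * x v) = 1"
      unfolding cinner_scale_left cinner_scale_right mult.assoc[symmetric] cc xx
      using s by (simp flip: of_real_mult)
    moreover have "g (\<lambda>v. ?c * x v) = g x / s"
      unfolding g_def matop_scale cinner_scale_left cinner_scale_right mult.assoc[symmetric] cc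
      by simp
    ultimately show ?thesis using U_scale[OF x, of ?c] by (simp only: S_def mem_Collect_eq)
  qed
  have "S \<noteq> {}"
  proof -
    have "cinner V u u \<noteq> 0" using cinner_self_zero[OF finV u(1)] u(3) by blast
    moreover have "cinner V u u = complex_of_real (Re (cinner V u u))" by (simp add: cinner_self)
    moreover have "Re (cinner V u u) \<ge> 0" by (simp add: cinner_self sum_nonneg)
    ultimately have "Re (cinner V u u) > 0" by (metis less_eq_real_def of_real_0)
    moreover have "u \<in> U" using u by (simp add: U_def)
    ultimately show ?thesis using norm by blast
  qed
  obtain x0 where x0S: "x0 \<in> S" and x0max: "\<forall>y\<in>S. g y \<le> g x0"
    using continuous_attains_sup[OF cS \<open>S \<noteq> {}\<close> gcont] by blast
  have x0U: "x0 \<in> U" and x0n: "cinner V x0 x0 = 1" using x0S by (auto simp: S_def)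
  define m where "m = g x0"
  have key: "g x \<le> m * Re (cinner V x x)" if x: "x \<in> U" for x
  proof -
    define s where "s = Re (cinner V x x)"
    have "s \<ge> 0" by (simp add: s_def cinner_self sum_nonneg)
    show ?thesis
    proof (cases "s = 0")
      case True
      then have "cinner V x x = 0" by (simp add: s_def cinner_self)
      then have "x = (\<lambda>_. 0)" using cinner_self_zero[OF finV] x by (auto simp: U_def)
      then show ?thesis by (simp add: g_def cinner_zero_left)
    next
      case False
      then have "s > 0" using \<open>s \<ge> 0\<close> by simp
      from norm[OF x s_def this] x0max have "g x / s \<le> m" by (auto simp: m_def)
      then show ?thesis using \<open>s > 0\<close> by (simp add: s_def[symmetric] field_simps)
    qed
  qed
  define \<mu> where "\<mu> = cinner V x0 (T x0)"
  have mu_real: "\<mu> = complex_of_real m"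
    using rq_real[of x0] unfolding \<mu>_def m_def g_def by (metis Reals_cnj_iff complex_is_Real_iff of_real_Re)
  define y where "y = (\<lambda>v. T x0 v - \<mu> * x0 v)"
  have yU: "y \<in> U" unfolding y_def using U_add[OF TU[OF x0U] x0U, of "- \<mu>"] by simp
  have x0y: "cinner V x0 y = 0" unfolding y_def cinner_diff_right cinner_scale_right x0n \<mu>_def by simp
  have yx0: "cinner V y x0 = 0" using x0y cinner_commute[of V y x0] by simp
  have Tx0: "T x0 = (\<lambda>v. y v + \<mu> * x0 v)" by (simp add: y_def)
  have yTx0: "cinner V y (T x0) = cinner V y y"
    unfolding Tx0 cinner_add_right cinner_scale_right yx0 by simp
  define Y where "Y = Re (cinner V y y)"
  define R where "R = Re (cinner V y (T y))"
  have yy: "cinner V y y = complex_of_real Y" by (simp add: Y_def cinner_self)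
  have Y0: "Y \<ge> 0" by (simp add: Y_def cinner_self sum_nonneg)
  have ineq: "2 * Y \<le> t * (m * Y - R)" if t: "t > 0" for t
  proof -
    define xt where "xt = (\<lambda>v. x0 v + complex_of_real t * y v)"
    have "xt \<in> U" unfolding xt_def by (rule U_add[OF x0U yU])
    from key[OF this] have k: "g xt \<le> m * Re (cinner V xt xt)" .
    have Txt: "T xt = (\<lambda>v. T x0 v + complex_of_real t * T y v)"
      unfolding xt_def by (rule matop_add_scale)
    have x0Ty: "cinner V x0 (T y) = cinner V y y"
      using selfadj[of x0 y] cinner_commute[of V "T x0" y] yTx0 yy by simp
    have "g xt = Re (\<mu> + complex_of_real t * cinner V y y + complex_of_real t * cinner V y y
        + complex_of_real (t\<^sup>2) * cinner V y (T y))"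
      unfolding g_def Txt unfolding xt_def cinner_expand x0Ty yTx0 \<mu>_def ..
    also have "\<dots> = m + 2 * t * Y + t\<^sup>2 * R"
      unfolding mu_real yy R_def by simp
    finally have 1: "g xt = m + 2 * t * Y + t\<^sup>2 * R" .
    have "Re (cinner V xt xt) = 1 + t\<^sup>2 * Y"
      unfolding xt_def cinner_expand x0n x0y yx0 yy by simp
    with k 1 have "m + 2 * t * Y + t\<^sup>2 * R \<le> m * (1 + t\<^sup>2 * Y)" by simp
    then have "t * (2 * Y) \<le> t * (t * (m * Y - R))"
      by (simp add: algebra_simps power2_eq_square)
    then show ?thesis using t by simp
  qed
  have "Y = 0"
  proof (rule ccontr)
    assume "Y \<noteq> 0"
    then have Yp: "Y > 0" using Y0 by simp
    define C where "C = m * Y - R"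
    define t where "t = Y / (\<bar>C\<bar> + 1)"
    have tp: "t > 0" using Yp by (simp add: t_def)
    have "t * C \<le> t * \<bar>C\<bar>" using tp by (simp add: mult_left_mono)
    also have "t * \<bar>C\<bar> < Y" using Yp by (simp add: t_def field_simps)
    finally have "t * C < Y" .
    with ineq[OF tp] Yp show False by (simp add: C_def)
  qed
  then have "cinner V y y = 0" by (simp add: yy)
  then have "y = (\<lambda>_. 0)" using cinner_self_zero[OF finV] yU by (auto simp: U_def)
  then have "T x0 = (\<lambda>v. \<mu> * x0 v)" using Tx0 by simp
  then show ?thesis using x0U x0n unfolding U_def \<mu>_def by blast
qed

end


lemma orth_proj_unique:
  assumes finV: "finite V" and WV: "W \<subseteq> vecs V"
    and Wdiff: "\<And>y1 y2. y1 \<in> W \<Longrightarrow> y2 \<in> W \<Longrightarrow> (\<lambda>v. y1 v - y2 v) \<in> W"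
    and y: "y \<in> W" "\<forall>z\<in>W. cinner V z (\<lambda>v. x v - y v) = 0"
  shows "orth_proj V W x = y"
  unfolding orth_proj_def
proof (rule the_equality)
  show "y \<in> W \<and> (\<forall>z\<in>W. cinner V z (\<lambda>v. x v - y v) = 0)" using y by blast
next
  fix y' assume y': "y' \<in> W \<and> (\<forall>z\<in>W. cinner V z (\<lambda>v. x v - y' v) = 0)"
  define d where "d = (\<lambda>v. y' v - y v)"
  have dW: "d \<in> W" unfolding d_def using Wdiff y' y by blast
  have "d = (\<lambda>v. (x v - y v) - (x v - y' v))" by (auto simp: d_def)
  then have "cinner V d d = cinner V d (\<lambda>v. (x v - y v) - (x v - y' v))"
    by (rule arg_cong[where f="cinner V d"])
  then have "cinner V d d = cinner V d (\<lambda>v. x v - y v) - cinner V d (\<lambda>v. x v - y' v)"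
    by (simp only: cinner_diff_right)
  also have "\<dots> = 0" using y y' dW by simp
  finally have "d = (\<lambda>_. 0)" using cinner_self_zero[OF finV] dW WV by blast
  then show "y' = y" unfolding d_def by (auto simp: fun_eq_iff)
qed

context herm
begin

lemma eigset_finite: "eigset B \<Longrightarrow> finite B \<and> card B \<le> card V"
  using orthonormal_finite finV by (auto simp: eigset_def)

theorem spectral:
  "\<exists>B. eigset B \<and> finite B \<and> (\<forall>x\<in>vecs V. x = (\<lambda>v. \<Sum>b\<in>B. cinner V b x * b v))"
proof -
  have P0: "\<exists>B. eigset B \<and> card B = 0"
    by (intro exI[of _ "{}"]) (simp add: eigset_def orthonormal_def)
  obtain k where k: "\<exists>B. eigset B \<and> card B = k"
      and kmax: "\<forall>j. (\<exists>B. eigset B \<and> card B = j) \<longrightarrow> j \<le> k"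
    using Nat.ex_has_greatest_nat[of "\<lambda>j. \<exists>B. eigset B \<and> card B = j" 0 "card V", OF P0]
      eigset_finite by blast
  then obtain B where eB: "eigset B" and cB: "card B = k" by blast
  have fB: "finite B" using eigset_finite[OF eB] by simp
  have onB: "orthonormal V B" using eB by (simp add: eigset_def)
  have "x = (\<lambda>v. \<Sum>b\<in>B. cinner V b x * b v)" if x: "x \<in> vecs V" for x
  proof -
    define r where "r = (\<lambda>v. x v - (\<Sum>b\<in>B. cinner V b x * b v))"
    have "(\<lambda>v. \<Sum>b\<in>B. cinner V b x * b v) \<in> vecs V"
      by (rule vecs_sum) (use onB in \<open>auto simp: orthonormal_def\<close>)
    then have rV: "r \<in> vecs V" using x by (auto simp: r_def vecs_def)
    have rb: "\<forall>b\<in>B. cinner V b r = 0"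
      unfolding r_def cinner_diff_right using orthonormal_expand_inner[OF onB fB] by simp
    have "r = (\<lambda>_. 0)"
    proof (rule ccontr)
      assume "r \<noteq> (\<lambda>_. 0)"
      from rayleigh[OF eB rV rb this] obtain e where e: "e \<in> vecs V" "\<forall>b\<in>B. cinner V b e = 0"
        "cinner V e e = 1" "T e = (\<lambda>v. cinner V e (T e) * e v)" by blast
      have eB': "e \<notin> B" using e(2,3) by auto
      have eb: "cinner V e b = 0" if "b \<in> B" for b
        using e(2) that cinner_commute[of V e b] by simp
      have "eigset (insert e B)"
        using eB e eb unfolding eigset_def orthonormal_def
        by auto
      moreover have "card (insert e B) = Suc k" using eB' fB cB by simp
      ultimately show False using kmax by fastforce
    qed
    then show ?thesis unfolding r_def by (auto simp: fun_eq_iff)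
  qed
  then show ?thesis using eB fB by blast
qed

definition ev :: "('v \<Rightarrow> complex) \<Rightarrow> complex" where "ev b = cinner V b (T b)"

lemma ev_real: "cnj (ev b) = ev b" unfolding ev_def by (rule rq_real)

lemma eigenspace_diff: "y1 \<in> eigenspace V T \<phi> \<Longrightarrow> y2 \<in> eigenspace V T \<phi> \<Longrightarrow> (\<lambda>v. y1 v - y2 v) \<in> eigenspace V T \<phi>"
  by (auto simp: eigenspace_def vecs_def matop_diff algebra_simps)

context
  fixes B assumes eB: "eigset B" and fB: "finite B"
    and exp: "\<forall>x\<in>vecs V. x = (\<lambda>v. \<Sum>b\<in>B. cinner V b x * b v)"
begin

lemma onB: "orthonormal V B" using eB by (simp add: eigset_def)
lemma Tb: "b \<in> B \<Longrightarrow> T b = (\<lambda>v. ev b * b v)" using eB by (simp add: eigset_def ev_def)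

lemma coeff_zero:
  assumes b: "b \<in> B" and z: "z \<in> eigenspace V T \<phi>" and ne: "ev b \<noteq> \<phi>"
  shows "cinner V b z = 0"
proof -
  have "\<phi> * cinner V b z = cinner V b (T z)"
    using z by (simp add: eigenspace_def cinner_scale_right)
  also have "\<dots> = cinner V (T b) z" by (rule selfadj)
  also have "\<dots> = ev b * cinner V b z" by (simp add: Tb[OF b] cinner_scale_left ev_real)
  finally have "(\<phi> - ev b) * cinner V b z = 0" by (simp add: algebra_simps)
  then show ?thesis using ne by simp
qed

lemma parseval: "x \<in> vecs V \<Longrightarrow> cinner V z x = (\<Sum>b\<in>B. cinner V b x * cinner V z b)"
proof -
  assume x: "x \<in> vecs V"
  have "cinner V z x = cinner V z (\<lambda>v. \<Sum>b\<in>B. cinner V b x * b v)"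
    by (rule arg_cong[where f="cinner V z", OF bspec[OF exp x]])
  then show ?thesis by (simp add: cinner_sum_right cinner_scale_right)
qed

lemma proj_prop:
  fixes \<phi> :: complex
  assumes x: "x \<in> vecs V"
  shows "(\<lambda>v. \<Sum>b\<in>{b\<in>B. ev b = \<phi>}. cinner V b x * b v) \<in> eigenspace V T \<phi> \<and>
    (\<forall>z\<in>eigenspace V T \<phi>. cinner V z (\<lambda>v. x v - (\<Sum>b\<in>{b\<in>B. ev b = \<phi>}. cinner V b x * b v)) = 0)"
    (is "?y \<in> _ \<and> _")
proof -
  define y where "y = ?y"
  have "y \<in> eigenspace V T \<phi> \<and> (\<forall>z\<in>eigenspace V T \<phi>. cinner V z (\<lambda>v. x v - y v) = 0)"
  proof
  have "y \<in> vecs V" unfolding y_def using onB by (intro vecs_sum) (auto simp: orthonormal_def)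
  moreover have "T y = (\<lambda>v. \<phi> * y v)"
    unfolding y_def matop_sum
    by (auto simp: Tb sum_distrib_left mult.left_commute intro!: sum.cong)
  ultimately show "y \<in> eigenspace V T \<phi>" by (simp add: eigenspace_def)
next
  show "\<forall>z\<in>eigenspace V T \<phi>. cinner V z (\<lambda>v. x v - y v) = 0"
  proof
    fix z assume z: "z \<in> eigenspace V T \<phi>"
    have "cinner V z x = (\<Sum>b\<in>B. cinner V b x * cinner V z b)" by (rule parseval[OF x])
    also have "\<dots> = (\<Sum>b\<in>{b\<in>B. ev b = \<phi>}. cinner V b x * cinner V z b)"
    proof (rule sum.mono_neutral_right)
      show "\<forall>i\<in>B - {b \<in> B. ev b = \<phi>}. cinner V i x * cinner V z i = 0"
        using coeff_zero z by (auto simp: cinner_commute[of V z])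
    qed (use fB in auto)
    also have "\<dots> = cinner V z y" unfolding y_def by (simp add: cinner_sum_right cinner_scale_right)
    finally show "cinner V z (\<lambda>v. x v - y v) = 0" by (simp add: cinner_diff_right)
  qed
qed
  then show ?thesis by (simp add: y_def)
qed

lemma eigenproj_eq:
  assumes x: "x \<in> vecs V"
  shows "eigenproj V T \<phi> x = (\<lambda>v. \<Sum>b\<in>{b\<in>B. ev b = \<phi>}. cinner V b x * b v)"
  unfolding eigenproj_def
  using proj_prop[OF x, of \<phi>]
  by (intro orth_proj_unique[OF finV] eigenspace_diff) (auto simp: eigenspace_def)

lemma eigenvalues_eq: "eigenvalues V T = ev ` B"
proof
  show "ev ` B \<subseteq> eigenvalues V T"
  proof
    fix \<phi> assume "\<phi> \<in> ev ` B"
    then obtain b where b: "b \<in> B" "\<phi> = ev b" by blast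
    have "cinner V b b = 1" using onB b by (auto simp: orthonormal_def)
    then have "b \<noteq> (\<lambda>_. 0)" by (auto simp: cinner_zero_left)
    moreover have "b \<in> vecs V" using onB b by (auto simp: orthonormal_def)
    ultimately show "\<phi> \<in> eigenvalues V T" using Tb b by (auto simp: eigenvalues_def)
  qed
next
  show "eigenvalues V T \<subseteq> ev ` B"
  proof
    fix \<phi> assume "\<phi> \<in> eigenvalues V T"
    then obtain z where z: "z \<in> vecs V" "z \<noteq> (\<lambda>_. 0)" "T z = (\<lambda>v. \<phi> * z v)"
      by (auto simp: eigenvalues_def)
    show "\<phi> \<in> ev ` B"
    proof (rule ccontr)
      assume "\<phi> \<notin> ev ` B"
      then have "\<forall>b\<in>B. cinner V b z = 0"
        using coeff_zero[of _ z \<phi>] z by (auto simp: eigenspace_def)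
      then have "(\<lambda>v. \<Sum>b\<in>B. cinner V b z * b v) = (\<lambda>_. 0)" by (auto intro!: ext sum.neutral)
      then show False using z(2) bspec[OF exp z(1)] by simp
    qed
  qed
qed

end
end


context herm
begin

lemma conj_eig:
  assumes Mreal: "\<And>u v. cnj (M u v) = M u v" and phi: "cnj \<phi> = \<phi>"
    and z: "z \<in> eigenspace V T \<phi>"
  shows "(\<lambda>v. cnj (z v)) \<in> eigenspace V T \<phi>"
proof -
  have zV: "z \<in> vecs V" and Tz: "T z = (\<lambda>v. \<phi> * z v)" using z by (auto simp: eigenspace_def)
  have "T (\<lambda>v. cnj (z v)) = (\<lambda>u. cnj (T z u))"
    by (auto simp: matop_def Mreal)
  also have "\<dots> = (\<lambda>u. \<phi> * cnj (z u))" using phi by (simp add: Tz)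
  finally show ?thesis using zV by (auto simp: eigenspace_def vecs_def)
qed

lemma main:
  fixes c E :: complex and f :: "'v \<Rightarrow> complex"
  assumes Mreal: "\<And>u v. cnj (M u v) = M u v"
    and w1: "w1 \<in> V" and w2: "w2 \<in> V"
    and fV: "f \<in> vecs V" and f0: "f \<noteq> (\<lambda>_. 0)" and fw: "f w1 = f w2"
    and H: "(\<lambda>u. - c * T f u - f w1 * ket w1 u - f w2 * ket w2 u) = (\<lambda>v. E * f v)"
    and Enot: "E \<notin> eigenvalues V (\<lambda>f v. - c * T f v)"
  defines "m1 \<equiv> 1 + (\<Sum>\<phi>\<in>eigenvalues V T.
              cinner V (eigenproj V T \<phi> (ket w1)) (eigenproj V T \<phi> (ket w1)) / (E + c * \<phi>))"
  defines "m2 \<equiv> 1 + (\<Sum>\<phi>\<in>eigenvalues V T.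
              cinner V (eigenproj V T \<phi> (ket w2)) (eigenproj V T \<phi> (ket w2)) / (E + c * \<phi>))"
  defines "m3 \<equiv> (\<Sum>\<phi>\<in>eigenvalues V T.
              cinner V (ket w1) (eigenproj V T \<phi> (ket w2)) / (E + c * \<phi>))"
  shows "m1 + m3 = 0 \<and> m2 + m3 = 0"
proof -
  obtain B where eB: "eigset B" and fB: "finite B"
    and exp: "\<forall>x\<in>vecs V. x = (\<lambda>v. \<Sum>b\<in>B. cinner V b x * b v)"
    using spectral by blast
  have onB: "orthonormal V B" using eB by (simp add: eigset_def)
  have BV: "b \<in> vecs V" if "b \<in> B" for b using onB that by (auto simp: orthonormal_def)
  have bb: "cinner V b b = 1" if "b \<in> B" for b using onB that by (auto simp: orthonormal_def)
  have Tb: "T b = (\<lambda>v. ev b * b v)" if "b \<in> B" for b using Tb[OF eB fB exp that] .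
  have ketV: "ket w \<in> vecs V" if "w \<in> V" for w using that by (auto simp: vecs_def ket_def)
  define a where "a = f w1"
  define d where "d = (\<lambda>b. E + c * ev b)"
  have Eq: "(\<lambda>u. c * T f u + E * f u) = (\<lambda>u. - a * (ket w1 u + ket w2 u))"
  proof (rule ext)
    fix u
    have h: "- c * T f u - f w2 * ket w1 u - f w2 * ket w2 u = E * f u"
      using fun_cong[OF H, of u] by (simp add: fw)
    have "c * T f u + E * f u = c * T f u + (- c * T f u - f w2 * ket w1 u - f w2 * ket w2 u)"
      by (simp only: h)
    also have "\<dots> = - f w2 * (ket w1 u + ket w2 u)" by (simp add: algebra_simps)
    finally show "c * T f u + E * f u = - a * (ket w1 u + ket w2 u)" by (simp add: a_def fw)
  qed
  have a0: "a \<noteq> 0"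
  proof
    assume "a = 0"
    have "(\<lambda>v. - c * T f v) = (\<lambda>v. E * f v)"
    proof (rule ext)
      fix v
      have "c * T f v + E * f v = 0" using fun_cong[OF Eq, of v] \<open>a = 0\<close> by simp
      then show "- c * T f v = E * f v" by (simp add: add_eq_0_iff)
    qed
    then have "E \<in> eigenvalues V (\<lambda>f v. - c * T f v)" using fV f0 by (auto simp: eigenvalues_def)
    then show False using Enot by simp
  qed
  have d0: "d b \<noteq> 0" if b: "b \<in> B" for b
  proof
    assume "d b = 0"
    then have "E = - c * ev b" by (simp add: d_def add_eq_0_iff)
    then have "(\<lambda>v. - c * T b v) = (\<lambda>v. E * b v)" by (simp add: Tb[OF b] mult.assoc)
    moreover have "b \<noteq> (\<lambda>_. 0)" using bb[OF b] by (auto simp: cinner_zero_left)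
    ultimately have "E \<in> eigenvalues V (\<lambda>f v. - c * T f v)" using BV[OF b] by (auto simp: eigenvalues_def)
    then show False using Enot by simp
  qed
  have coef: "cinner V b f = - a * (cnj (b w1) + cnj (b w2)) / d b" if b: "b \<in> B" for b
  proof -
    have "cinner V b (\<lambda>u. c * T f u + E * f u) = cinner V b (\<lambda>u. - a * (ket w1 u + ket w2 u))"
      using Eq by simp
    moreover have "cinner V b (\<lambda>u. c * T f u + E * f u) = d b * cinner V b f"
    proof -
      have "cinner V b (T f) = ev b * cinner V b f"
        by (simp add: selfadj Tb[OF b] cinner_scale_left ev_real)
      then show ?thesis
        by (simp add: cinner_add_right cinner_scale_right d_def algebra_simps)
    qed
    moreover have "cinner V b (\<lambda>u. - a * (ket w1 u + ket w2 u)) = - a * (cnj (b w1) + cnj (b w2))"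
      using cinner_scale_right[of V b "- a" "\<lambda>u. ket w1 u + ket w2 u"] by (simp add: cinner_add_right cinner_ket_right finV w1 w2)
    ultimately show ?thesis using d0[OF b] by (simp add: field_simps)
  qed
  have fexp: "f w = (\<Sum>b\<in>B. - a * ((cnj (b w1) + cnj (b w2)) * b w / d b))" for w
  proof -
    have "f w = (\<Sum>b\<in>B. cinner V b f * b w)" using fun_cong[OF bspec[OF exp fV], of w] by simp
    also have "\<dots> = (\<Sum>b\<in>B. - a * ((cnj (b w1) + cnj (b w2)) * b w / d b))"
      by (intro sum.cong refl) (simp add: coef)
    finally show ?thesis .
  qed
  have gen: "1 + X = 0" if h: "a = - a * X" for X :: complex
  proof -
    have "a * (1 + X) = a + a * X" by (simp add: distrib_left)
    also have "\<dots> = 0" using h by (metis add.commute add_eq_0_iff mult_minus_left)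
    finally show ?thesis using a0 by simp
  qed
  have S1: "1 + (\<Sum>b\<in>B. (cnj (b w1) * b w1 + cnj (b w2) * b w1) / d b) = 0"
  proof -
    have "a = - a * (\<Sum>b\<in>B. (cnj (b w1) + cnj (b w2)) * b w1 / d b)"
      using fexp[of w1] by (simp add: a_def[symmetric] sum_distrib_left)
    from gen[OF this] show ?thesis by (simp add: distrib_right)
  qed
  have S2: "1 + (\<Sum>b\<in>B. (cnj (b w2) * b w2 + cnj (b w1) * b w2) / d b) = 0"
  proof -
    have "a = - a * (\<Sum>b\<in>B. (cnj (b w1) + cnj (b w2)) * b w2 / d b)"
      using fexp[of w2] by (simp add: a_def fw sum_distrib_left)
    from gen[OF this] show ?thesis by (simp add: distrib_right add.commute)
  qed
  have eigs: "eigenvalues V T = ev ` B" by (rule eigenvalues_eq[OF eB fB exp])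
  have P: "eigenproj V T \<phi> (ket w) = (\<lambda>v. \<Sum>b\<in>{b\<in>B. ev b = \<phi>}. cnj (b w) * b v)" if "w \<in> V" for \<phi> w
    using eigenproj_eq[OF eB fB exp ketV[OF that], of \<phi>] that by (simp add: cinner_ket_right finV)
  have PP: "cinner V (eigenproj V T \<phi> (ket w)) (eigenproj V T \<phi> (ket w))
      = (\<Sum>b\<in>{b\<in>B. ev b = \<phi>}. cnj (b w) * b w)" if w: "w \<in> V" for \<phi> w
  proof -
    have on': "orthonormal V {b\<in>B. ev b = \<phi>}" by (rule orthonormal_subset[OF onB]) auto
    have fin': "finite {b\<in>B. ev b = \<phi>}" using fB by simp
    show ?thesis unfolding P[OF w] cinner_sum_left
    proof (intro sum.cong refl)
      fix b assume b: "b \<in> {b\<in>B. ev b = \<phi>}"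
      have e: "cinner V b (\<lambda>v. \<Sum>b'\<in>{b\<in>B. ev b = \<phi>}. cnj (b' w) * b' v) = cnj (b w)"
        by (rule orthonormal_expand_inner[OF on' fin' b])
      show "cnj (cnj (b w)) * cinner V b (\<lambda>v. \<Sum>b'\<in>{b\<in>B. ev b = \<phi>}. cnj (b' w) * b' v) = cnj (b w) * b w"
        unfolding e complex_cnj_cnj by (rule mult.commute)
    qed
  qed
  have realP: "cnj (eigenproj V T \<phi> (ket w2) w1) = eigenproj V T \<phi> (ket w2) w1" if phi: "\<phi> \<in> ev ` B" for \<phi>
  proof -
    have phr: "cnj \<phi> = \<phi>" using phi ev_real by auto
    define y where "y = eigenproj V T \<phi> (ket w2)"
    have yprop: "y \<in> eigenspace V T \<phi> \<and> (\<forall>z\<in>eigenspace V T \<phi>. cinner V z (\<lambda>v. ket w2 v - y v) = 0)"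
      using proj_prop[OF eB fB exp ketV[OF w2], of \<phi>] eigenproj_eq[OF eB fB exp ketV[OF w2], of \<phi>]
      by (simp add: y_def)
    have "eigenproj V T \<phi> (ket w2) = (\<lambda>v. cnj (y v))"
      unfolding eigenproj_def
    proof (intro orth_proj_unique[OF finV] eigenspace_diff)
      show "eigenspace V T \<phi> \<subseteq> vecs V" by (auto simp: eigenspace_def)
      show "(\<lambda>v. cnj (y v)) \<in> eigenspace V T \<phi>" by (rule conj_eig[OF Mreal phr]) (use yprop in blast)
      show "\<forall>z\<in>eigenspace V T \<phi>. cinner V z (\<lambda>v. ket w2 v - cnj (y v)) = 0"
      proof
        fix z assume z: "z \<in> eigenspace V T \<phi>"
        have z': "(\<lambda>v. cnj (z v)) \<in> eigenspace V T \<phi>" by (rule conj_eig[OF Mreal phr z])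
        have "cinner V z (\<lambda>v. ket w2 v - cnj (y v)) = cnj (cinner V (\<lambda>v. cnj (z v)) (\<lambda>v. ket w2 v - y v))"
          unfolding cinner_def cnj_sum by (intro sum.cong refl) (simp add: ket_def)
        also have "\<dots> = 0" using yprop z' by simp
        finally show "cinner V z (\<lambda>v. ket w2 v - cnj (y v)) = 0" .
      qed
    qed (auto)
    then have "y = (\<lambda>v. cnj (y v))" by (simp add: y_def)
    then have "y w1 = cnj (y w1)" using fun_cong[of y "\<lambda>v. cnj (y v)" w1] by simp
    then show ?thesis by (simp add: y_def)
  qed
  have m3P: "cinner V (ket w1) (eigenproj V T \<phi> (ket w2)) = (\<Sum>b\<in>{b\<in>B. ev b = \<phi>}. cnj (b w2) * b w1)" for \<phi>
    by (simp add: cinner_ket_left finV w1 P[OF w2])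
  have m3P': "cinner V (ket w1) (eigenproj V T \<phi> (ket w2)) = (\<Sum>b\<in>{b\<in>B. ev b = \<phi>}. cnj (b w1) * b w2)"
    if "\<phi> \<in> ev ` B" for \<phi>
  proof -
    have "cinner V (ket w1) (eigenproj V T \<phi> (ket w2)) = cnj (eigenproj V T \<phi> (ket w2) w1)"
      using realP[OF that] by (simp add: cinner_ket_left finV w1)
    also have "\<dots> = (\<Sum>b\<in>{b\<in>B. ev b = \<phi>}. cnj (b w1) * b w2)"
      by (simp add: P[OF w2] mult.commute)
    finally show ?thesis .
  qed
  have conv: "(\<Sum>\<phi>\<in>ev ` B. (\<Sum>b\<in>{b\<in>B. ev b = \<phi>}. h b) / (E + c * \<phi>)) = (\<Sum>b\<in>B. h b / d b)" for h
  proof -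
    have "(\<Sum>b\<in>B. h b / d b) = (\<Sum>\<phi>\<in>ev ` B. \<Sum>b | b \<in> B \<and> ev b = \<phi>. h b / d b)"
      by (rule sum.image_gen[OF fB])
    also have "\<dots> = (\<Sum>\<phi>\<in>ev ` B. (\<Sum>b\<in>{b\<in>B. ev b = \<phi>}. h b) / (E + c * \<phi>))"
      by (intro sum.cong refl) (auto simp: sum_divide_distrib d_def intro!: sum.cong)
    finally show ?thesis by simp
  qed
  have "m1 + m3 = 1 + (\<Sum>\<phi>\<in>ev ` B. (\<Sum>b\<in>{b\<in>B. ev b = \<phi>}. cnj (b w1) * b w1 + cnj (b w2) * b w1) / (E + c * \<phi>))"
    unfolding m1_def m3_def eigs PP[OF w1] m3P
    by (simp add: sum.distrib add_divide_distrib)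
  also have "\<dots> = 0" unfolding conv by (rule S1)
  finally have r1: "m1 + m3 = 0" .
  have "m2 + m3 = 1 + (\<Sum>\<phi>\<in>ev ` B. (\<Sum>b\<in>{b\<in>B. ev b = \<phi>}. cnj (b w2) * b w2 + cnj (b w1) * b w2) / (E + c * \<phi>))"
    unfolding m2_def m3_def eigs PP[OF w2]
    by (simp add: m3P' sum.distrib add_divide_distrib cong: sum.cong)
  also have "\<dots> = 0" unfolding conv by (rule S2)
  finally have r2: "m2 + m3 = 0" .
  show ?thesis using r1 r2 by simp
qed

end


theorem corollary2:
  fixes n k :: nat and \<gamma> :: real and w1 w2 :: "nat set" and E :: complex
  defines "V \<equiv> johnson_vertices n k"
  defines "A \<equiv> johnson_A n k"
  defines "P \<equiv> eigenproj V A"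
  assumes "2 * k < n" and "1 \<le> k"
    and "w1 \<in> V" and "w2 \<in> V" and "w1 \<noteq> w2"
    and "\<gamma> > 0"
    and "\<exists>f\<in>H_inv n k w1 w2. f \<noteq> (\<lambda>_. 0) \<and> hamiltonian n k \<gamma> w1 w2 f = (\<lambda>v. E * f v)"
    and "E \<notin> eigenvalues V (\<lambda>f v. - complex_of_real \<gamma> * A f v)"
  defines "m1 \<equiv> 1 + (\<Sum>\<phi>\<in>eigenvalues V A.
              cinner V (P \<phi> (ket w1)) (P \<phi> (ket w1)) / (E + complex_of_real \<gamma> * \<phi>))"
  defines "m2 \<equiv> 1 + (\<Sum>\<phi>\<in>eigenvalues V A.
              cinner V (P \<phi> (ket w2)) (P \<phi> (ket w2)) / (E + complex_of_real \<gamma> * \<phi>))"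
  defines "m3 \<equiv> (\<Sum>\<phi>\<in>eigenvalues V A.
              cinner V (ket w1) (P \<phi> (ket w2)) / (E + complex_of_real \<gamma> * \<phi>))"
  shows "m1 + m3 = 0 \<and> m2 + m3 = 0"
proof -
  define M where "M = (\<lambda>u v. if johnson_adj k u v then (1::complex) else 0)"
  have finV: "finite V"
    by (rule finite_subset[of _ "Pow {1..n}"]) (auto simp: V_def johnson_vertices_def)
  interpret H: herm V M
    by unfold_locales (auto simp: finV M_def johnson_adj_def Int_commute)
  have AT: "A = matop V M"
    by (auto simp: A_def johnson_A_def matop_def M_def V_def intro!: ext)
  obtain f where fI: "f \<in> H_inv n k w1 w2" and f0: "f \<noteq> (\<lambda>_. 0)"
    and fH: "hamiltonian n k \<gamma> w1 w2 f = (\<lambda>v. E * f v)"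
    using assms by blast
  have fV: "f \<in> vecs V" using fI by (simp add: H_inv_def V_def)
  have cw: "card w1 = k" "card w2 = k" using assms(6,7) by (auto simp: V_def johnson_vertices_def)
  have fw: "f w1 = f w2"
  proof -
    have "card (w1 \<inter> w1 \<inter> w2) = card (w2 \<inter> w1 \<inter> w2)" by (simp add: Int_commute Int_left_commute)
    moreover have "{# card (w1 \<inter> w1), card (w1 \<inter> w2) #} = {# card (w2 \<inter> w1), card (w2 \<inter> w2) #}"
      using cw by (simp add: Int_commute add_mset_commute)
    ultimately show ?thesis using fI assms(6,7) unfolding H_inv_def V_def by blast
  qed
  have Hf: "(\<lambda>u. - complex_of_real \<gamma> * matop V M f u - f w1 * ket w1 u - f w2 * ket w2 u) = (\<lambda>v. E * f v)"
    using fH by (simp add: hamiltonian_def AT[symmetric] A_def)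
  have En: "E \<notin> eigenvalues V (\<lambda>f v. - complex_of_real \<gamma> * matop V M f v)"
    using assms(11) by (simp add: AT)
  show ?thesis
    unfolding m1_def m2_def m3_def P_def AT
    by (rule H.main[OF _ assms(6,7) fV f0 fw Hf En]) (simp add: M_def)
qed


end
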